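(* Let $f,f'\colon\mathbb F_2^{10}\to\mathbb F_2$ be given by $f(\mathbf x)=x_1x_6\oplus x_2x_7\oplus x_3x_8\oplus x_4x_9\oplus x_5x_{10}\oplus x_1x_2x_3x_4x_5$ and $f'(\mathbf x)=f(\mathbf x)\oplus x_4\oplus x_6\oplus x_8\oplus x_{10}\oplus x_1x_2\oplus x_2x_3\oplus x_1x_2x_3\oplus x_2x_4x_5\oplus x_1x_2x_4x_5\oplus x_2x_3x_4x_5$. Then $f$ and $f'$ are bent and not extended-affine equivalent, yet the translation designs $\operatorname{dev}(D_f)$ and $\operatorname{dev}(D_{f'})$ are isomorphic.
   Context: For a Boolean function $f$ on $\mathbb F_2^n$, $D_f=\{\mathbf x: f(\mathbf x)=1\}$, and $\operatorname{dev}(D_f)$ is the incidence structure with point set $\mathbb F_2^n$ and blocks $D_f+\mathbf g$, $\mathbf g\in\mathbb F_2^n$. Boolean functions $f,f'$ on $\mathbb F_2^n$ are EA-equivalent if $f=f'\circ A_2\oplus A_3$ for an affine permutation $A_2$ of $\mathbb F_2^n$ and an affine function $A_3$. A Boolean function is bent if all its Walsh coefficients $\sum_{\mathbf x}(-1)^{f(\mathbf x)\oplus\langle\mathbf a,\mathbf x\rangle}$ equal $\pm2^{n/2}$. Isomorphism of incidence structures: $M=PM'Q$ for permutation matrices $P,Q$ acting on incidence matrices. *)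

theory Defs
  imports "HOL-Analysis.Analysis" "HOL-Library.Z2" "HOL-Library.Numeral_Type"
begin

definition dotp :: "bit ^ 'n \<Rightarrow> bit ^ 'n \<Rightarrow> bit" where
  "dotp a x = (\<Sum>i\<in>UNIV. a $ i * x $ i)"

definition sgn_bit :: "bit \<Rightarrow> int" where
  "sgn_bit b = (if b = 0 then 1 else -1)"

definition walsh :: "(bit ^ 'n \<Rightarrow> bit) \<Rightarrow> bit ^ 'n \<Rightarrow> int" where
  "walsh f a = (\<Sum>x\<in>UNIV. sgn_bit (f x + dotp a x))"

definition bent :: "(bit ^ 'n \<Rightarrow> bit) \<Rightarrow> bool" where
  "bent f \<longleftrightarrow> (\<forall>a. \<bar>real_of_int (walsh f a)\<bar> = 2 powr (real CARD('n) / 2))"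

definition EA_equivalent :: "(bit ^ 'n \<Rightarrow> bit) \<Rightarrow> (bit ^ 'n \<Rightarrow> bit) \<Rightarrow> bool" where
  "EA_equivalent f f' \<longleftrightarrow>
     (\<exists>(M :: bit ^ 'n ^ 'n) b a c. invertible M \<and>
        (\<forall>x. f x = f' (M *v x + b) + dotp a x + c))"

definition support :: "(bit ^ 'n \<Rightarrow> bit) \<Rightarrow> (bit ^ 'n) set" where
  "support f = {x. f x = 1}"

definition dev_incident :: "(bit ^ 'n \<Rightarrow> bit) \<Rightarrow> bit ^ 'n \<Rightarrow> bit ^ 'n \<Rightarrow> bool" where
  "dev_incident f x g \<longleftrightarrow> x \<in> (\<lambda>y. y + g) ` support f"

text \<open>Isomorphism M = P M' Q with permutation matrices P, Q: equivalently, a permutation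
  of points and a permutation of block indices transforming one incidence matrix into the other.\<close>
definition dev_isomorphic :: "(bit ^ 'n \<Rightarrow> bit) \<Rightarrow> (bit ^ 'n \<Rightarrow> bit) \<Rightarrow> bool" where
  "dev_isomorphic f f' \<longleftrightarrow>
     (\<exists>\<pi> \<rho>. bij \<pi> \<and> bij \<rho> \<and> (\<forall>x g. dev_incident f x g \<longleftrightarrow> dev_incident f' (\<pi> x) (\<rho> g)))"

text \<open>Coordinates x_1,...,x_10 are x $ 0, ..., x $ 9.\<close>
definition f5 :: "bit ^ 10 \<Rightarrow> bit" where
  "f5 x = x$0 * x$5 + x$1 * x$6 + x$2 * x$7 + x$3 * x$8 + x$4 * x$9
          + x$0 * x$1 * x$2 * x$3 * x$4"

definition f5' :: "bit ^ 10 \<Rightarrow> bit" where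
  "f5' x = f5 x + x$3 + x$5 + x$7 + x$9 + x$0 * x$1 + x$1 * x$2 + x$0 * x$1 * x$2
           + x$1 * x$3 * x$4 + x$0 * x$1 * x$3 * x$4 + x$1 * x$2 * x$3 * x$4"

end

theory Submission
  imports Defs
begin

declare add_bit_eq_xor[simp del] mult_bit_eq_and[simp del]

instance bit :: finite
proof
  show "finite (UNIV :: bit set)"
    by (rule finite_subset[of _ "{0,1}"]) (auto intro: bit.exhaust)
qed

definition H :: "bit \<Rightarrow> bit \<Rightarrow> bit \<Rightarrow> bit \<Rightarrow> bit \<Rightarrow> bit" where
 "H x0 x1 x2 x3 x4 = x0*x1*x2*x3*x4 + x3 + x0*x1 + x1*x2 + x0*x1*x2 + x1*x3*x4 + x0*x1*x3*x4 + x1*x2*x3*x4"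
definition U0 :: "bit \<Rightarrow> bit \<Rightarrow> bit" where "U0 b c = (1+b)*(1+c)"
definition U1 :: "bit \<Rightarrow> bit \<Rightarrow> bit" where "U1 a c = a + c + a*c"
definition U2 :: "bit \<Rightarrow> bit \<Rightarrow> bit" where "U2 a b = (1+a)*(1+b)"

lemma f5'_alt: "f5' x = (x$0+1)*x$5 + x$1*x$6 + (x$2+1)*x$7 + x$3*x$8 + (x$4+1)*x$9 + H (x$0) (x$1) (x$2) (x$3) (x$4)"
  unfolding f5'_def f5_def H_def by algebra

lemma Uid: fixes x0 x1 x2 a0 a1 a2 :: bit shows
 "(x0+a0)*(U0 x1 x2 + U0 a1 a2) + (x1+a1)*(U1 x0 x2 + U1 a0 a2) + (x2+a2)*(U2 x0 x1 + U2 a0 a1) = (x0+a0)*(x1+a1)*(x2+a2)"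
  unfolding U0_def U1_def U2_def
  by (cases x0; cases x1; cases x2; cases a0; cases a1; cases a2; simp)

lemma Hid: fixes z0 z1 z2 z3 z4 :: bit shows
 "H (z0+1) z1 (z2+1) z3 (z4+z0+1) = z0*z1*z2*z3*z4 + z1 + z3 + z0*z1*z2"
  unfolding H_def by (cases z0; cases z1; cases z2; cases z3; cases z4; simp)

definition vec10 :: "bit \<Rightarrow> bit \<Rightarrow> bit \<Rightarrow> bit \<Rightarrow> bit \<Rightarrow> bit \<Rightarrow> bit \<Rightarrow> bit \<Rightarrow> bit \<Rightarrow> bit \<Rightarrow> bit^10" where
 "vec10 a0 a1 a2 a3 a4 a5 a6 a7 a8 a9 = (\<chi> i. if i = 0 then a0 else if i = 1 then a1 else if i = 2 then a2
   else if i = 3 then a3 else if i = 4 then a4 else if i = 5 then a5 else if i = 6 then a6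
   else if i = 7 then a7 else if i = 8 then a8 else a9)"

lemma vec10_nth [simp]:
  "vec10 a0 a1 a2 a3 a4 a5 a6 a7 a8 a9 $ 0 = a0"
  "vec10 a0 a1 a2 a3 a4 a5 a6 a7 a8 a9 $ 1 = a1"
  "vec10 a0 a1 a2 a3 a4 a5 a6 a7 a8 a9 $ 2 = a2"
  "vec10 a0 a1 a2 a3 a4 a5 a6 a7 a8 a9 $ 3 = a3"
  "vec10 a0 a1 a2 a3 a4 a5 a6 a7 a8 a9 $ 4 = a4"
  "vec10 a0 a1 a2 a3 a4 a5 a6 a7 a8 a9 $ 5 = a5"
  "vec10 a0 a1 a2 a3 a4 a5 a6 a7 a8 a9 $ 6 = a6"
  "vec10 a0 a1 a2 a3 a4 a5 a6 a7 a8 a9 $ 7 = a7"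
  "vec10 a0 a1 a2 a3 a4 a5 a6 a7 a8 a9 $ 8 = a8"
  "vec10 a0 a1 a2 a3 a4 a5 a6 a7 a8 a9 $ 9 = a9"
  by (simp_all add: vec10_def)

lemma A0: "0 \<le> k \<Longrightarrow> k < 10 \<Longrightarrow> Abs_bit0 k = (of_int k :: 10)"
  by (simp add: bit0.of_int_eq)
lemma U10: "(UNIV::10 set) = {0,1,2,3,4,5,6,7,8,9}"
proof -
  have "(UNIV::10 set) = set enum_class.enum" using UNIV_enum by simp
  also have "\<dots> = {0,1,2,3,4,5,6,7,8,9}" 
    apply (simp add: enum_bit0_def enum_bit1_def Abs_bit0'_def Abs_bit1'_def upt_rec)
    apply (simp add: A0 del: of_int_numeral)
    apply simp
    done
  finally show ?thesis .
qed
lemma all10: "(\<forall>i::10. P i) \<longleftrightarrow> P 0 \<and> P 1 \<and> P 2 \<and> P 3 \<and> P 4 \<and> P 5 \<and> P 6 \<and> P 7 \<and> P 8 \<and> P 9"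
  by (metis U10 UNIV_I insertE empty_iff)

lemma vec10_eq: "x = y \<longleftrightarrow> x$0 = y$0 \<and> x$1 = y$1 \<and> x$2 = y$2 \<and> x$3 = y$3 \<and> x$4 = y$4 \<and>
   x$5 = y$5 \<and> x$6 = y$6 \<and> x$7 = y$7 \<and> x$8 = y$8 \<and> x$9 = y$9" for x y :: "bit^10"
  unfolding vec_eq_iff all10 by blast

definition piM :: "bit^10 \<Rightarrow> bit^10" where
 "piM x = vec10 (x$0+1) (x$1) (x$2+1) (x$3) (x$4+x$0+1) (x$5+x$9+U0 (x$1) (x$2))
    (x$6+U1 (x$0) (x$2)) (x$7+U2 (x$0) (x$1)) (x$8+1) (x$9)"
definition rhoM :: "bit^10 \<Rightarrow> bit^10" where
 "rhoM x = vec10 (x$0) (x$1) (x$2) (x$3) (x$4+x$0) (x$5+x$9+U0 (x$1) (x$2))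
    (x$6+U1 (x$0) (x$2)+1) (x$7+U2 (x$0) (x$1)) (x$8) (x$9)"

lemma inj_piM: "inj piM"
proof (rule injI)
  fix x y assume e: "piM x = piM y"
  have c: "\<And>k. piM x $ k = piM y $ k" using e by simp
  have 0: "x$0 = y$0" using c[of 0] by (simp add: piM_def)
  have 1: "x$1 = y$1" using c[of 1] by (simp add: piM_def)
  have 2: "x$2 = y$2" using c[of 2] by (simp add: piM_def)
  have 3: "x$3 = y$3" using c[of 3] by (simp add: piM_def)
  have 4: "x$4 = y$4" using c[of 4] 0 by (simp add: piM_def)
  have 9: "x$9 = y$9" using c[of 9] by (simp add: piM_def)
  have 5: "x$5 = y$5" using c[of 5] 1 2 9 by (simp add: piM_def)
  have 6: "x$6 = y$6" using c[of 6] 0 2 by (simp add: piM_def)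
  have 7: "x$7 = y$7" using c[of 7] 0 1 by (simp add: piM_def)
  have 8: "x$8 = y$8" using c[of 8] by (simp add: piM_def)
  show "x = y" using 0 1 2 3 4 5 6 7 8 9 by (simp add: vec10_eq)
qed

lemma inj_rhoM: "inj rhoM"
proof (rule injI)
  fix x y assume e: "rhoM x = rhoM y"
  have c: "\<And>k. rhoM x $ k = rhoM y $ k" using e by simp
  have 0: "x$0 = y$0" using c[of 0] by (simp add: rhoM_def)
  have 1: "x$1 = y$1" using c[of 1] by (simp add: rhoM_def)
  have 2: "x$2 = y$2" using c[of 2] by (simp add: rhoM_def)
  have 3: "x$3 = y$3" using c[of 3] by (simp add: rhoM_def)
  have 4: "x$4 = y$4" using c[of 4] 0 by (simp add: rhoM_def)
  have 9: "x$9 = y$9" using c[of 9] by (simp add: rhoM_def)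
  have 5: "x$5 = y$5" using c[of 5] 1 2 9 by (simp add: rhoM_def)
  have 6: "x$6 = y$6" using c[of 6] 0 2 by (simp add: rhoM_def)
  have 7: "x$7 = y$7" using c[of 7] 0 1 by (simp add: rhoM_def)
  have 8: "x$8 = y$8" using c[of 8] by (simp add: rhoM_def)
  show "x = y" using 0 1 2 3 4 5 6 7 8 9 by (simp add: vec10_eq)
qed

lemma bij_fin: "inj (f :: bit^10 \<Rightarrow> bit^10) \<Longrightarrow> bij f"
  by (simp add: bij_def finite_UNIV_inj_surj)

lemma core:
  fixes x0 x1 x2 x3 x4 x5 x6 x7 x8 x9 a0 a1 a2 a3 a4 a5 a6 a7 a8 a9 :: bit
  shows
 "((x0+1)+a0+1)*((x5+x9+U0 x1 x2)+(a5+a9+U0 a1 a2)) + (x1+a1)*((x6+U1 x0 x2)+(a6+U1 a0 a2+1))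
  + ((x2+1)+a2+1)*((x7+U2 x0 x1)+(a7+U2 a0 a1)) + (x3+a3)*((x8+1)+a8) + ((x4+x0+1)+(a4+a0)+1)*(x9+a9)
  + H ((x0+1)+a0) (x1+a1) ((x2+1)+a2) (x3+a3) ((x4+x0+1)+(a4+a0))
  = (x0+a0)*(x5+a5) + (x1+a1)*(x6+a6) + (x2+a2)*(x7+a7) + (x3+a3)*(x8+a8) + (x4+a4)*(x9+a9)
    + (x0+a0)*(x1+a1)*(x2+a2)*(x3+a3)*(x4+a4)"
proof -
  have e0: "(x0+1)+a0 = (x0+a0)+1" by (simp add: ac_simps)
  have e2: "(x2+1)+a2 = (x2+a2)+1" by (simp add: ac_simps)
  have e4: "(x4+x0+1)+(a4+a0) = (x4+a4)+(x0+a0)+1" by (simp add: ac_simps)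
  have hH: "H ((x0+1)+a0) (x1+a1) ((x2+1)+a2) (x3+a3) ((x4+x0+1)+(a4+a0))
     = (x0+a0)*(x1+a1)*(x2+a2)*(x3+a3)*(x4+a4) + (x1+a1) + (x3+a3) + (x0+a0)*(x1+a1)*(x2+a2)"
    unfolding e0 e2 e4 by (rule Hid)
  have hU: "(x0+a0)*(U0 x1 x2 + U0 a1 a2) + (x1+a1)*(U1 x0 x2 + U1 a0 a2) + (x2+a2)*(U2 x0 x1 + U2 a0 a1) = (x0+a0)*(x1+a1)*(x2+a2)"
    by (rule Uid)
  have "((x0+1)+a0+1)*((x5+x9+U0 x1 x2)+(a5+a9+U0 a1 a2)) + (x1+a1)*((x6+U1 x0 x2)+(a6+U1 a0 a2+1))
  + ((x2+1)+a2+1)*((x7+U2 x0 x1)+(a7+U2 a0 a1)) + (x3+a3)*((x8+1)+a8) + ((x4+x0+1)+(a4+a0)+1)*(x9+a9)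
  + H ((x0+1)+a0) (x1+a1) ((x2+1)+a2) (x3+a3) ((x4+x0+1)+(a4+a0))
  = (x0+a0)*(x5+a5) + (x1+a1)*(x6+a6) + (x2+a2)*(x7+a7) + (x3+a3)*(x8+a8) + (x4+a4)*(x9+a9)
    + (x0+a0)*(x1+a1)*(x2+a2)*(x3+a3)*(x4+a4)
    + 2 * ((x0+a0)*(x9+a9) + (x1+a1) + (x3+a3) + (x0+a0)*(x1+a1)*(x2+a2)
          + ((x5+x9+U0 x1 x2)+(a5+a9+U0 a1 a2)) + ((x7+U2 x0 x1)+(a7+U2 a0 a1)) + (x9+a9))"
    using hH hU by algebra
  then show ?thesis by simp
qed

lemma iso_eq: "f5' (piM p + rhoM g) = f5 (p + g)"
  unfolding f5'_alt f5_def vector_add_component piM_def rhoM_def vec10_nth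
  by (rule core)

lemma incid: "dev_incident f x g \<longleftrightarrow> f (x + g) = 1" for f :: "bit^'n \<Rightarrow> bit"
proof -
  have gg: "\<And>y::bit^'n. y + g + g = y"
    by (simp add: vec_eq_iff)
  show ?thesis unfolding dev_incident_def support_def
    by (auto simp: gg image_iff)
qed

lemma iso: "dev_isomorphic f5 f5'"
  unfolding dev_isomorphic_def
  apply (rule exI[of _ piM], rule exI[of _ rhoM])
  by (simp add: bij_fin inj_piM inj_rhoM incid iso_eq)

definition ee :: "'n \<Rightarrow> bit^'n" where "ee j = (\<chi> i. if i = j then 1 else 0)"
lemma ee_nth [simp]: "ee j $ i = (if i = j then 1 else 0)" by (simp add: ee_def)

lemma bit_add_self [simp]: "(x::bit) + x = 0" by (cases x) simp_all
lemma vflip2 [simp]: "(p::bit^'n) + ee j + ee j = p"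
  by (simp add: vec_eq_iff add.assoc)

lemma sgn_bit_flip: "sgn_bit (b + 1) = - sgn_bit b" by (cases b) (simp_all add: sgn_bit_def)

lemma flip_zero:
  fixes h :: "bit^'n::finite \<Rightarrow> int"
  assumes P: "\<And>p. P (p + ee j) = P p" and hh: "\<And>p. P p \<Longrightarrow> h (p + ee j) = - h p"
  shows "(\<Sum>p\<in>{p. P p}. h p) = 0"
proof -
  have "(\<Sum>p\<in>{p. P p}. h p) = (\<Sum>p\<in>{p. P p}. h (p + ee j))"
    by (rule sum.reindex_bij_witness[where i="\<lambda>p. p + ee j" and j="\<lambda>p. p + ee j"]) (auto simp: P)
  also have "\<dots> = (\<Sum>p\<in>{p. P p}. - h p)" by (rule sum.cong) (auto simp: hh)
  also have "\<dots> = - (\<Sum>p\<in>{p. P p}. h p)" by (simp add: sum_negf)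
  finally show ?thesis by simp
qed

lemma sum_split_pred:
  fixes h :: "bit^'n::finite \<Rightarrow> int" and C :: "bit^'n \<Rightarrow> bit"
  shows "(\<Sum>p\<in>{p. P p}. h p) = (\<Sum>p\<in>{p. P p \<and> C p = 0}. h p) + (\<Sum>p\<in>{p. P p \<and> C p = 1}. h p)"
proof -
  have "{p. P p} = {p. P p \<and> C p = 0} \<union> {p. P p \<and> C p = 1}" by auto
  moreover have "{p. P p \<and> C p = 0} \<inter> {p. P p \<and> C p = 1} = {}" by auto
  ultimately show ?thesis by (simp add: sum.union_disjoint)
qed

lemma step:
  fixes Phi :: "bit^'n::finite \<Rightarrow> bit" and C :: "bit^'n \<Rightarrow> bit"
  assumes P: "\<And>p. P (p + ee j) = P p" and C: "\<And>p. C (p + ee j) = C p"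
    and Phi: "\<And>p. Phi (p + ee j) = Phi p + C p"
  shows "(\<Sum>p\<in>{p. P p}. sgn_bit (Phi p)) = (\<Sum>p\<in>{p. P p \<and> C p = 0}. sgn_bit (Phi p))"
proof -
  have "(\<Sum>p\<in>{p. P p \<and> C p = 1}. sgn_bit (Phi p)) = 0"
    by (rule flip_zero[where j=j]) (auto simp: P C Phi sgn_bit_flip)
  then show ?thesis using sum_split_pred[where P=P and h="\<lambda>p. sgn_bit (Phi p)" and C=C] by simp
qed

lemma half:
  fixes P :: "bit^'n::finite \<Rightarrow> bool"
  assumes P: "\<And>p. P (p + ee j) = P p"
  shows "card {p. P p} = 2 * card {p. P p \<and> p$j = 0}"
proof -
  have "{p. P p} = {p. P p \<and> p$j = 0} \<union> {p. P p \<and> p$j = 1}" by auto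
  moreover have "{p. P p \<and> p$j = 0} \<inter> {p. P p \<and> p$j = 1} = {}" by auto
  moreover have "card {p. P p \<and> p$j = 1} = card {p. P p \<and> p$j = 0}"
  proof (rule bij_betw_same_card[where f="\<lambda>p. p + ee j"])
    show "bij_betw (\<lambda>p. p + ee j) {p. P p \<and> p $ j = 1} {p. P p \<and> p $ j = 0}"
    proof (rule bij_betw_byWitness[where f'="\<lambda>p. p + ee j"])
      show "\<forall>a\<in>{p. P p \<and> p $ j = 1}. a + ee j + ee j = a" by simp
      show "\<forall>a'\<in>{p. P p \<and> p $ j = 0}. a' + ee j + ee j = a'" by simp
      show "(\<lambda>p. p + ee j) ` {p. P p \<and> p $ j = 1} \<subseteq> {p. P p \<and> p $ j = 0}"
      proof
        fix x assume "x \<in> (\<lambda>p. p + ee j) ` {p. P p \<and> p $ j = 1}"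
        then obtain p where "P p" "p $ j = 1" "x = p + ee j" by blast
        then show "x \<in> {p. P p \<and> p $ j = 0}" using P[of p] by simp
      qed
      show "(\<lambda>p. p + ee j) ` {p. P p \<and> p $ j = 0} \<subseteq> {p. P p \<and> p $ j = 1}"
      proof
        fix x assume "x \<in> (\<lambda>p. p + ee j) ` {p. P p \<and> p $ j = 0}"
        then obtain p where "P p" "p $ j = 0" "x = p + ee j" by blast
        then show "x \<in> {p. P p \<and> p $ j = 1}" using P[of p] by simp
      qed
    qed
  qed
  ultimately show ?thesis by (simp add: card_Un_disjoint)
qed

lemma dotp_add: "dotp a (p + w) = dotp a p + dotp a w"
  by (simp add: dotp_def distrib_left sum.distrib)
lemma dotp_ee: "dotp a (ee j) = a $ j"
  by (simp add: dotp_def if_distrib cong: if_cong)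

lemma dotp10: "dotp a p = a$0*p$0 + a$1*p$1 + a$2*p$2 + a$3*p$3 + a$4*p$4 + a$5*p$5 + a$6*p$6 + a$7*p$7 + a$8*p$8 + a$9*p$9"
  for a p :: "bit^10"
  unfolding dotp_def U10 apply (subst sum.insert, simp, simp)+
  apply simp
  done

lemma eq_of_sum0: "(x::bit) + y = 0 \<Longrightarrow> x = y" by (cases x; cases y) simp_all

lemma MM_walsh:
  fixes F G :: "bit^10 \<Rightarrow> bit" and c0 c1 c2 c3 c4 :: bit
  assumes F: "\<And>p. F p = (p$0+c0)*p$5 + (p$1+c1)*p$6 + (p$2+c2)*p$7 + (p$3+c3)*p$8 + (p$4+c4)*p$9 + G p"
    and G: "\<And>p w. p$0 = w$0 \<Longrightarrow> p$1 = w$1 \<Longrightarrow> p$2 = w$2 \<Longrightarrow> p$3 = w$3 \<Longrightarrow> p$4 = w$4 \<Longrightarrow> G p = G w"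
  shows "\<bar>walsh F a\<bar> = 32"
proof -
  define Phi where "Phi (p::bit^10) = F p + dotp a p" for p
  have G5: "\<And>p. G (p + ee 5) = G p" by (rule G) simp_all
  have G6: "\<And>p. G (p + ee 6) = G p" by (rule G) simp_all
  have G7: "\<And>p. G (p + ee 7) = G p" by (rule G) simp_all
  have G8: "\<And>p. G (p + ee 8) = G p" by (rule G) simp_all
  have G9: "\<And>p. G (p + ee 9) = G p" by (rule G) simp_all
  have F5: "\<And>p. F (p + ee 5) = F p + (p$0+c0)"
    unfolding F G5 by (simp add: algebra_simps)
  have F6: "\<And>p. F (p + ee 6) = F p + (p$1+c1)"
    unfolding F G6 by (simp add: algebra_simps)
  have F7: "\<And>p. F (p + ee 7) = F p + (p$2+c2)"
    unfolding F G7 by (simp add: algebra_simps)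
  have F8: "\<And>p. F (p + ee 8) = F p + (p$3+c3)"
    unfolding F G8 by (simp add: algebra_simps)
  have F9: "\<And>p. F (p + ee 9) = F p + (p$4+c4)"
    unfolding F G9 by (simp add: algebra_simps)
  define C0 where "C0 (p::bit^10) = p$0 + c0 + a$5" for p
  define C1 where "C1 (p::bit^10) = p$1 + c1 + a$6" for p
  define C2 where "C2 (p::bit^10) = p$2 + c2 + a$7" for p
  define C3 where "C3 (p::bit^10) = p$3 + c3 + a$8" for p
  define C4 where "C4 (p::bit^10) = p$4 + c4 + a$9" for p
  have P5: "\<And>p. Phi (p + ee 5) = Phi p + C0 p"
    unfolding Phi_def C0_def F5 dotp_add dotp_ee by (simp add: ac_simps)
  have P6: "\<And>p. Phi (p + ee 6) = Phi p + C1 p"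
    unfolding Phi_def C1_def F6 dotp_add dotp_ee by (simp add: ac_simps)
  have P7: "\<And>p. Phi (p + ee 7) = Phi p + C2 p"
    unfolding Phi_def C2_def F7 dotp_add dotp_ee by (simp add: ac_simps)
  have P8: "\<And>p. Phi (p + ee 8) = Phi p + C3 p"
    unfolding Phi_def C3_def F8 dotp_add dotp_ee by (simp add: ac_simps)
  have P9: "\<And>p. Phi (p + ee 9) = Phi p + C4 p"
    unfolding Phi_def C4_def F9 dotp_add dotp_ee by (simp add: ac_simps)
  have "walsh F a = (\<Sum>p\<in>{p. True}. sgn_bit (Phi p))"
    by (simp add: walsh_def Phi_def)
  also have "\<dots> = (\<Sum>p\<in>{p. True \<and> C0 p = 0}. sgn_bit (Phi p))"
    by (rule step[where j=5]) (simp_all add: C0_def P5)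
  also have "\<dots> = (\<Sum>p\<in>{p::bit^10. (True \<and> C0 p = 0) \<and> C1 p = 0}. sgn_bit (Phi p))"
    by (rule step[where j=6]) (simp_all add: C0_def C1_def P6)
  also have "\<dots> = (\<Sum>p\<in>{p::bit^10. ((True \<and> C0 p = 0) \<and> C1 p = 0) \<and> C2 p = 0}. sgn_bit (Phi p))"
    by (rule step[where j=7]) (simp_all add: C0_def C1_def C2_def P7)
  also have "\<dots> = (\<Sum>p\<in>{p::bit^10. (((True \<and> C0 p = 0) \<and> C1 p = 0) \<and> C2 p = 0) \<and> C3 p = 0}. sgn_bit (Phi p))"
    by (rule step[where j=8]) (simp_all add: C0_def C1_def C2_def C3_def P8)
  also have "\<dots> = (\<Sum>p\<in>{p::bit^10. ((((True \<and> C0 p = 0) \<and> C1 p = 0) \<and> C2 p = 0) \<and> C3 p = 0) \<and> C4 p = 0}. sgn_bit (Phi p))"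
    by (rule step[where j=9]) (simp_all add: C0_def C1_def C2_def C3_def C4_def P9)
  finally have W: "walsh F a = (\<Sum>p\<in>{p. C0 p = 0 \<and> C1 p = 0 \<and> C2 p = 0 \<and> C3 p = 0 \<and> C4 p = 0}. sgn_bit (Phi p))"
    by (simp add: conj_assoc)
  define d0 where "d0 = a$5 + c0"
  define d1 where "d1 = a$6 + c1"
  define d2 where "d2 = a$7 + c2"
  define d3 where "d3 = a$8 + c3"
  define d4 where "d4 = a$9 + c4"
  define dv where "dv = vec10 d0 d1 d2 d3 d4 0 0 0 0 0"
  define K where "K = G dv + a$0*d0 + a$1*d1 + a$2*d2 + a$3*d3 + a$4*d4"
  have Sdef: "{p. C0 p = 0 \<and> C1 p = 0 \<and> C2 p = 0 \<and> C3 p = 0 \<and> C4 p = 0}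
      = {p::bit^10. p$0 = d0 \<and> p$1 = d1 \<and> p$2 = d2 \<and> p$3 = d3 \<and> p$4 = d4}"
  proof -
    have e: "\<And>x y z::bit. (x + y + z = 0) = (x = z + y)"
      by (metis add.assoc add.commute add_0_right bit_add_self)
    show ?thesis unfolding C0_def C1_def C2_def C3_def C4_def d0_def d1_def d2_def d3_def d4_def e ..
  qed
  have PhiK: "Phi p = K" if "p$0 = d0" "p$1 = d1" "p$2 = d2" "p$3 = d3" "p$4 = d4" for p
  proof -
    have g: "G p = G dv" by (rule G) (simp_all add: dv_def that)
    have "Phi p = K + 2 * (c0*p$5 + c1*p$6 + c2*p$7 + c3*p$8 + c4*p$9 + a$5*p$5 + a$6*p$6 + a$7*p$7 + a$8*p$8 + a$9*p$9)"
      unfolding Phi_def F dotp10 K_def g that d0_def d1_def d2_def d3_def d4_def by algebra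
    then show ?thesis by simp
  qed
  let ?S = "{p::bit^10. p$0 = d0 \<and> p$1 = d1 \<and> p$2 = d2 \<and> p$3 = d3 \<and> p$4 = d4}"
  have W2: "walsh F a = int (card ?S) * sgn_bit K"
    unfolding W Sdef by (simp add: PhiK)
  have "card ?S = 2 * card {p::bit^10. (p$0 = d0 \<and> p$1 = d1 \<and> p$2 = d2 \<and> p$3 = d3 \<and> p$4 = d4) \<and> p$5 = 0}"
    by (rule half) simp
  also have "\<dots> = 4 * card {p::bit^10. ((p$0 = d0 \<and> p$1 = d1 \<and> p$2 = d2 \<and> p$3 = d3 \<and> p$4 = d4) \<and> p$5 = 0) \<and> p$6 = 0}"
    by (subst half[where j=6]) simp_all
  also have "\<dots> = 8 * card {p::bit^10. (((p$0 = d0 \<and> p$1 = d1 \<and> p$2 = d2 \<and> p$3 = d3 \<and> p$4 = d4) \<and> p$5 = 0) \<and> p$6 = 0) \<and> p$7 = 0}"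
    by (subst half[where j=7]) simp_all
  also have "\<dots> = 16 * card {p::bit^10. ((((p$0 = d0 \<and> p$1 = d1 \<and> p$2 = d2 \<and> p$3 = d3 \<and> p$4 = d4) \<and> p$5 = 0) \<and> p$6 = 0) \<and> p$7 = 0) \<and> p$8 = 0}"
    by (subst half[where j=8]) simp_all
  also have "\<dots> = 32 * card {p::bit^10. (((((p$0 = d0 \<and> p$1 = d1 \<and> p$2 = d2 \<and> p$3 = d3 \<and> p$4 = d4) \<and> p$5 = 0) \<and> p$6 = 0) \<and> p$7 = 0) \<and> p$8 = 0) \<and> p$9 = 0}"
    by (subst half[where j=9]) simp_all
  also have "{p::bit^10. (((((p$0 = d0 \<and> p$1 = d1 \<and> p$2 = d2 \<and> p$3 = d3 \<and> p$4 = d4) \<and> p$5 = 0) \<and> p$6 = 0) \<and> p$7 = 0) \<and> p$8 = 0) \<and> p$9 = 0} = {dv}"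
    by (auto simp: dv_def vec10_eq)
  finally have "card ?S = 32" by simp
  then show ?thesis unfolding W2 by (cases K) (simp_all add: sgn_bit_def)
qed

lemma f5_form: "f5 p = (p$0+0)*p$5 + (p$1+0)*p$6 + (p$2+0)*p$7 + (p$3+0)*p$8 + (p$4+0)*p$9 + (p$0*p$1*p$2*p$3*p$4)"
  by (simp add: f5_def)
lemma f5'_form: "f5' p = (p$0+1)*p$5 + (p$1+0)*p$6 + (p$2+1)*p$7 + (p$3+0)*p$8 + (p$4+1)*p$9 + H (p$0) (p$1) (p$2) (p$3) (p$4)"
  by (simp add: f5'_alt)

lemma powr32: "2 powr (real CARD(10) / 2) = (32::real)"
proof -
  have "2 powr (real CARD(10) / 2) = 2 powr (real (5::nat))" by simp
  also have "\<dots> = 2 ^ 5" by (rule powr_realpow) simp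
  finally show ?thesis by simp
qed

lemma bent_f5: "bent f5"
  unfolding bent_def powr32
proof
  fix a
  have "\<bar>walsh f5 a\<bar> = 32"
    by (rule MM_walsh[OF f5_form]) simp
  then show "\<bar>real_of_int (walsh f5 a)\<bar> = 32" by linarith
qed

lemma bent_f5': "bent f5'"
  unfolding bent_def powr32
proof
  fix a
  have "\<bar>walsh f5' a\<bar> = 32"
    by (rule MM_walsh[OF f5'_form]) simp
  then show "\<bar>real_of_int (walsh f5' a)\<bar> = 32" by linarith
qed


definition D3 :: "(bit^'n \<Rightarrow> bit) \<Rightarrow> bit^'n \<Rightarrow> bit^'n \<Rightarrow> bit^'n \<Rightarrow> bit^'n \<Rightarrow> bit" where
 "D3 F u v w x = F x + F (x+u) + F (x+v) + F (x+w) + F (x+u+v) + F (x+u+w) + F (x+v+w) + F (x+u+v+w)"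

lemma D3_add: "D3 (\<lambda>y. F y + G y) u v w x = D3 F u v w x + D3 G u v w x"
  unfolding D3_def by algebra

lemma D3_quad: "D3 (\<lambda>y. (y$i + c) * y$j) u v w x = 0"
proof -
  have "D3 (\<lambda>y. (y$i + c) * y$j) u v w x = 2 * (4*(x$i)*(x$j) + 2*(x$i)*(u$j+v$j+w$j) + 2*(u$i+v$i+w$i)*(x$j)
     + 2*((u$i)*(u$j) + (v$i)*(v$j) + (w$i)*(w$j))
     + ((u$i)*(v$j) + (u$i)*(w$j) + (v$i)*(u$j) + (v$i)*(w$j) + (w$i)*(u$j) + (w$i)*(v$j))
     + 4*c*(x$j) + 2*c*(u$j+v$j+w$j))"
    unfolding D3_def vector_add_component by algebra
  then show ?thesis by simp
qed

lemma D3_comp: "D3 (\<lambda>y. G (M *v y + b)) u v w x = D3 G (M *v u) (M *v v) (M *v w) (M *v x + b)"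
  unfolding D3_def by (simp add: matrix_vector_right_distrib ac_simps)

lemma D3_aff: "D3 (\<lambda>y. G y + dotp a y + c) u v w x = D3 G u v w x"
proof -
  have "D3 (\<lambda>y. G y + dotp a y + c) u v w x = D3 G u v w x + 2*(4*dotp a x + 2*dotp a u + 2*dotp a v + 2*dotp a w + 4*c)"
    unfolding D3_def dotp_add by algebra
  then show ?thesis by simp
qed

lemma D3_inv:
  assumes t: "\<And>y. F (y + t) = F y"
  shows "D3 F t v w x = 0"
proof -
  have e1: "F (x + t) = F x" by (rule t)
  have e2: "F (x + t + v) = F (x + v)" using t[of "x+v"] by (simp add: ac_simps)
  have e3: "F (x + t + w) = F (x + w)" using t[of "x+w"] by (simp add: ac_simps)
  have e4: "F (x + t + v + w) = F (x + v + w)" using t[of "x+v+w"] by (simp add: ac_simps)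
  have "D3 F t v w x = 2 * (F x + F (x+v) + F (x+w) + F (x+v+w))"
    unfolding D3_def e1 e2 e3 e4 by algebra
  then show ?thesis by simp
qed

definition Q5v :: "bit^10 \<Rightarrow> bit" where "Q5v y = y$0*y$1*y$2*y$3*y$4"
definition Hv :: "bit^10 \<Rightarrow> bit" where "Hv y = H (y$0) (y$1) (y$2) (y$3) (y$4)"

lemma D3_f5: "D3 f5 u v w x = D3 Q5v u v w x"
proof -
  have "f5 = (\<lambda>y. (y$0+0)*y$5 + (y$1+0)*y$6 + (y$2+0)*y$7 + (y$3+0)*y$8 + (y$4+0)*y$9 + Q5v y)"
    by (rule ext) (simp only: f5_form Q5v_def)
  then have "D3 f5 u v w x = D3 (\<lambda>y. (y$0+0)*y$5 + (y$1+0)*y$6 + (y$2+0)*y$7 + (y$3+0)*y$8 + (y$4+0)*y$9 + Q5v y) u v w x"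
    by simp
  also have "\<dots> = D3 Q5v u v w x"
    unfolding D3_add D3_quad by simp
  finally show ?thesis .
qed

lemma D3_f5': "D3 f5' u v w x = D3 Hv u v w x"
proof -
  have "f5' = (\<lambda>y. (y$0+1)*y$5 + (y$1+0)*y$6 + (y$2+1)*y$7 + (y$3+0)*y$8 + (y$4+1)*y$9 + Hv y)"
    by (rule ext) (simp only: f5'_form Hv_def)
  then have "D3 f5' u v w x = D3 (\<lambda>y. (y$0+1)*y$5 + (y$1+0)*y$6 + (y$2+1)*y$7 + (y$3+0)*y$8 + (y$4+1)*y$9 + Hv y) u v w x"
    by simp
  also have "\<dots> = D3 Hv u v w x"
    unfolding D3_add D3_quad by simp
  finally show ?thesis .
qed

definition lowz :: "bit^10 \<Rightarrow> bool" where "lowz y \<longleftrightarrow> y$0 = 0 \<and> y$1 = 0 \<and> y$2 = 0 \<and> y$3 = 0 \<and> y$4 = 0"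

lemma D3_Hv_lowz: "lowz t \<Longrightarrow> D3 Hv t v w x = 0"
  by (rule D3_inv) (simp add: Hv_def lowz_def)

definition one10 :: "bit^10" where "one10 = vec10 1 1 1 1 1 1 1 1 1 1"

lemma Q5_test1: "u$0 = 1 \<or> u$1 = 1 \<or> u$2 = 1 \<Longrightarrow> D3 Q5v u (ee 3) (ee 4) one10 = 1"
  unfolding D3_def Q5v_def one10_def
  by (cases "u$0"; cases "u$1"; cases "u$2"; simp)

lemma Q5_test2: "u$2 = 1 \<or> u$3 = 1 \<or> u$4 = 1 \<Longrightarrow> D3 Q5v u (ee 0) (ee 1) one10 = 1"
  unfolding D3_def Q5v_def one10_def
  by (cases "u$2"; cases "u$3"; cases "u$4"; simp)

lemma Hv_test: "D3 Hv (ee 0) (ee 1) (ee 2) 0 = 1" "D3 Hv (ee 0) (ee 1) (ee 2) (ee 3) = 1"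
  unfolding D3_def Hv_def H_def by simp_all

definition dl :: "bit^10 \<Rightarrow> bit^10 \<Rightarrow> bit" where
  "dl p y = (y$0+p$0+1)*(y$1+p$1+1)*(y$2+p$2+1)*(y$3+p$3+1)*(y$4+p$4+1)"

lemma dl_test: "D3 (dl p) (ee 0) (ee 1) (ee 2) 0 = (p$3+1)*(p$4+1)"
  "D3 (dl p) (ee 0) (ee 1) (ee 2) (ee 3) = p$3*(p$4+1)"
  unfolding D3_def dl_def
  by (cases "p$0"; cases "p$1"; cases "p$2"; cases "p$3"; cases "p$4"; simp)+


lemma prod5: "(a*b*c*d*e = (1::bit)) \<longleftrightarrow> a = 1 \<and> b = 1 \<and> c = 1 \<and> d = 1 \<and> e = 1"
  by (cases a; cases b; cases c; cases d; cases e; simp)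
lemma bit_p1_0: "(x + 1 = (0::bit)) \<longleftrightarrow> x = 1" by (cases x) simp_all
lemma bit_p1_1: "(x + 1 = (1::bit)) \<longleftrightarrow> x = 0" by (cases x) simp_all
lemma bit_iff_eq: "((x::bit) = 1 \<longleftrightarrow> y = 1) \<Longrightarrow> x = y" by (cases x; cases y) simp_all
lemma vcancel: "x + b + (z + b) = x + (z::bit^'n)"
proof -
  have "\<And>i. x$i + b$i + (z$i + b$i) = x$i + z$i" by (case_tac "b$i") simp_all
  then show ?thesis by (simp add: vec_eq_iff)
qed
lemma vcancel2: "x + b + b = (x::bit^'n)"
proof -
  have "\<And>i. x$i + b$i + b$i = x$i" by (case_tac "b$i") simp_all
  then show ?thesis by (simp add: vec_eq_iff)
qed

lemma dl_iff: "dl p z = 1 \<longleftrightarrow> lowz (z + p)"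
  unfolding dl_def lowz_def prod5 by (simp add: bit_p1_1)

definition one5 :: "bit^10" where "one5 = vec10 1 1 1 1 1 0 0 0 0 0"

lemma Q5_iff: "Q5v y = 1 \<longleftrightarrow> lowz (y + one5)"
  unfolding Q5v_def lowz_def prod5 one5_def by (simp add: bit_p1_0)

lemma not_EA: "\<not> EA_equivalent f5 f5'"
proof
  assume "EA_equivalent f5 f5'"
  then obtain M :: "bit^10^10" and b a c where inv: "invertible M"
    and eq: "\<forall>x. f5 x = f5' (M *v x + b) + dotp a x + c"
    unfolding EA_equivalent_def by blast
  obtain N :: "bit^10^10" where MN: "M ** N = mat 1" and NM: "N ** M = mat 1"
    using inv unfolding invertible_def by blast
  have MNv: "\<And>y. M *v (N *v y) = y" by (simp add: matrix_vector_mul_assoc MN)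
  have NMv: "\<And>y. N *v (M *v y) = y" by (simp add: matrix_vector_mul_assoc NM)
  have f5eq: "f5 = (\<lambda>y. f5' (M *v y + b) + dotp a y + c)" using eq by auto
  have key: "D3 Q5v u v w x = D3 Hv (M *v u) (M *v v) (M *v w) (M *v x + b)" for u v w x
  proof -
    have "D3 Q5v u v w x = D3 f5 u v w x" by (simp add: D3_f5)
    also have "\<dots> = D3 (\<lambda>y. f5' (M *v y + b) + dotp a y + c) u v w x" using f5eq by simp
    also have "\<dots> = D3 (\<lambda>y. f5' (M *v y + b)) u v w x" by (rule D3_aff)
    also have "\<dots> = D3 f5' (M *v u) (M *v v) (M *v w) (M *v x + b)" by (rule D3_comp)
    also have "\<dots> = D3 Hv (M *v u) (M *v v) (M *v w) (M *v x + b)" by (rule D3_f5')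
    finally show ?thesis .
  qed
  have lz_back: "lowz u" if lu: "lowz (M *v u)" for u
  proof (rule ccontr)
    assume nl: "\<not> lowz u"
    have z: "\<And>v w x. D3 Q5v u v w x = 0" using key D3_Hv_lowz[OF lu] by simp
    show False
    proof (cases "u$0 = 1 \<or> u$1 = 1 \<or> u$2 = 1")
      case True
      from Q5_test1[OF True] z[of "ee 3" "ee 4" one10] show False by simp
    next
      case False
      then have "u$3 = 1 \<or> u$4 = 1" using nl unfolding lowz_def by auto
      then have "u$2 = 1 \<or> u$3 = 1 \<or> u$4 = 1" by auto
      from Q5_test2[OF this] z[of "ee 0" "ee 1" one10] show False by simp
    qed
  qed
  have lz_fwd: "lowz (M *v u)" if lu: "lowz u" for u
  proof -
    let ?Y = "{y. lowz y}"
    have sub: "(\<lambda>y. N *v y) ` ?Y \<subseteq> ?Y"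
    proof
      fix z assume "z \<in> (\<lambda>y. N *v y) ` ?Y"
      then obtain y where y: "lowz y" "z = N *v y" by blast
      then have "lowz (M *v z)" by (simp add: MNv)
      then show "z \<in> ?Y" using lz_back by blast
    qed
    have injN: "inj_on (\<lambda>y. N *v y) ?Y" by (rule inj_onI) (metis MNv)
    have "(\<lambda>y. N *v y) ` ?Y = ?Y" by (rule endo_inj_surj[OF _ sub injN]) simp
    then have "u \<in> (\<lambda>y. N *v y) ` ?Y" using lu by blast
    then obtain y where "lowz y" "u = N *v y" by blast
    then show ?thesis by (simp add: MNv)
  qed
  define pp where "pp = M *v one5 + b"
  have Qdl: "Q5v y = dl pp (M *v y + b)" for y
  proof (rule bit_iff_eq)
    have "M *v y + b + pp = M *v (y + one5)"
      unfolding pp_def matrix_vector_right_distrib by (rule vcancel)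
    then show "(Q5v y = 1) = (dl pp (M *v y + b) = 1)"
      unfolding Q5_iff dl_iff using lz_back lz_fwd by metis
  qed
  have Qfun: "Q5v = (\<lambda>y. dl pp (M *v y + b))" using Qdl by (rule ext)
  have key2: "D3 Hv t1 t2 t3 t4 = D3 (dl pp) t1 t2 t3 t4" for t1 t2 t3 t4
  proof -
    let ?u = "N *v t1" and ?v = "N *v t2" and ?w = "N *v t3" and ?x = "N *v (t4 + b)"
    have "D3 Hv (M *v ?u) (M *v ?v) (M *v ?w) (M *v ?x + b) = D3 Q5v ?u ?v ?w ?x" by (rule key[symmetric])
    also have "\<dots> = D3 (\<lambda>y. dl pp (M *v y + b)) ?u ?v ?w ?x" by (simp only: Qfun)
    also have "\<dots> = D3 (dl pp) (M *v ?u) (M *v ?v) (M *v ?w) (M *v ?x + b)" by (rule D3_comp)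
    finally show ?thesis by (simp add: MNv vcancel2)
  qed
  have h1: "(pp$3+1)*(pp$4+1) = 1" using key2[of "ee 0" "ee 1" "ee 2" 0] Hv_test(1) dl_test(1) by simp
  have h2: "pp$3*(pp$4+1) = 1" using key2[of "ee 0" "ee 1" "ee 2" "ee 3"] Hv_test(2) dl_test(2) by simp
  show False using h1 h2 by (cases "pp$3") simp_all
qed

theorem mainTheorem5:
  shows "bent f5 \<and> bent f5' \<and> \<not> EA_equivalent f5 f5' \<and> dev_isomorphic f5 f5'"
  using bent_f5 bent_f5' not_EA iso by blast

end
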